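(* Let $\mathcal{C}$ be a Cayley algebra over an arbitrary field $\mathbb{F}$ with norm $\mathrm{n}$, and let $\mathrm{O}(\mathcal{C},\mathrm{n})$ be the orthogonal group of $(\mathcal{C},\mathrm{n})$. Then the set $\mathrm{LocAut}(\mathcal{C})$ of local automorphisms of $\mathcal{C}$ coincides with $\{\varphi\in\mathrm{O}(\mathcal{C},\mathrm{n})\mid \varphi(1)=1\}$.
   Context: A Cayley (octonion) algebra over $\mathbb{F}$ is a unital nonassociative algebra $\mathcal{C}$ of dimension $8$ over $\mathbb{F}$ endowed with a quadratic form $\mathrm{n}:\mathcal{C}\to\mathbb{F}$ (the norm) such that $\mathrm{n}(xy)=\mathrm{n}(x)\mathrm{n}(y)$ for all $x,y$ and whose polar form $\mathrm{n}(x,y)=\mathrm{n}(x+y)-\mathrm{n}(x)-\mathrm{n}(y)$ is a nondegenerate bilinear form. $\mathrm{O}(\mathcal{C},\mathrm{n})$ is the group of linear bijections $\varphi$ of $\mathcal{C}$ with $\mathrm{n}(\varphi(x))=\mathrm{n}(x)$ for all $x$. A linear map $\psi:\mathcal{C}\to\mathcal{C}$ is a local automorphism if for every $x\in\mathcal{C}$ there is an algebra automorphism $\varphi_x$ of $\mathcal{C}$ (depending on $x$) with $\psi(x)=\varphi_x(x)$. *)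

theory Defs
  imports Complex_Main
begin

text \<open>An algebra over a field 'a is modelled on the whole type 'v, a vector space
  via the scalar multiplication sc; mult is the algebra product, e its unit.\<close>

definition bilinear_map :: "('a::field \<Rightarrow> 'v::ab_group_add \<Rightarrow> 'v) \<Rightarrow> ('v \<Rightarrow> 'v \<Rightarrow> 'w::ab_group_add) \<Rightarrow> ('a \<Rightarrow> 'w \<Rightarrow> 'w) \<Rightarrow> bool" where
  "bilinear_map sc m scw \<longleftrightarrow>
     (\<forall>x. Vector_Spaces.linear sc scw (\<lambda>y. m x y)) \<and>
     (\<forall>y. Vector_Spaces.linear sc scw (\<lambda>x. m x y))"

definition polar :: "('v::ab_group_add \<Rightarrow> 'a::field) \<Rightarrow> 'v \<Rightarrow> 'v \<Rightarrow> 'a" where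
  "polar n x y = n (x + y) - n x - n y"

definition quadratic_form :: "('a::field \<Rightarrow> 'v::ab_group_add \<Rightarrow> 'v) \<Rightarrow> ('v \<Rightarrow> 'a) \<Rightarrow> bool" where
  "quadratic_form sc n \<longleftrightarrow>
     (\<forall>c x. n (sc c x) = c * c * n x) \<and> bilinear_map sc (polar n) (*)"

definition cayley_algebra ::
  "('a::field \<Rightarrow> 'v::ab_group_add \<Rightarrow> 'v) \<Rightarrow> ('v \<Rightarrow> 'v \<Rightarrow> 'v) \<Rightarrow> 'v \<Rightarrow> ('v \<Rightarrow> 'a) \<Rightarrow> bool" where
  "cayley_algebra sc mult e n \<longleftrightarrow>
     vector_space sc \<and>
     vector_space.dim sc (UNIV :: 'v set) = 8 \<and>
     bilinear_map sc mult sc \<and>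
     (\<forall>x. mult e x = x \<and> mult x e = x) \<and>
     quadratic_form sc n \<and>
     (\<forall>x y. n (mult x y) = n x * n y) \<and>
     (\<forall>x. (\<forall>y. polar n x y = 0) \<longrightarrow> x = 0)"

definition algebra_aut :: "('a::field \<Rightarrow> 'v::ab_group_add \<Rightarrow> 'v) \<Rightarrow> ('v \<Rightarrow> 'v \<Rightarrow> 'v) \<Rightarrow> ('v \<Rightarrow> 'v) \<Rightarrow> bool" where
  "algebra_aut sc mult \<phi> \<longleftrightarrow>
     Vector_Spaces.linear sc sc \<phi> \<and> bij \<phi> \<and> (\<forall>x y. \<phi> (mult x y) = mult (\<phi> x) (\<phi> y))"

definition local_aut :: "('a::field \<Rightarrow> 'v::ab_group_add \<Rightarrow> 'v) \<Rightarrow> ('v \<Rightarrow> 'v \<Rightarrow> 'v) \<Rightarrow> ('v \<Rightarrow> 'v) \<Rightarrow> bool" where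
  "local_aut sc mult \<psi> \<longleftrightarrow>
     Vector_Spaces.linear sc sc \<psi> \<and> (\<forall>x. \<exists>\<phi>. algebra_aut sc mult \<phi> \<and> \<psi> x = \<phi> x)"

definition orthogonal_group :: "('a::field \<Rightarrow> 'v::ab_group_add \<Rightarrow> 'v) \<Rightarrow> ('v \<Rightarrow> 'a) \<Rightarrow> ('v \<Rightarrow> 'v) set" where
  "orthogonal_group sc n =
     {\<phi>. Vector_Spaces.linear sc sc \<phi> \<and> bij \<phi> \<and> (\<forall>x. n (\<phi> x) = n x)}"

end

theory Submission
  imports Defs
begin

locale cay =
  fixes sc :: "'a::field \<Rightarrow> 'v::ab_group_add \<Rightarrow> 'v" (infixr "*s" 75)
    and mult :: "'v \<Rightarrow> 'v \<Rightarrow> 'v" (infixl "\<odot>" 70)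
    and e :: 'v and n :: "'v \<Rightarrow> 'a"
  assumes cay: "cayley_algebra sc mult e n"
begin

lemma vs: "vector_space sc" using cay by (simp add: cayley_algebra_def)

sublocale vs: vector_space sc by (rule vs)

lemma dim8: "vs.dim (UNIV::'v set) = 8" using cay by (simp add: cayley_algebra_def)

lemma lin_l: "Vector_Spaces.linear sc sc (\<lambda>y. x \<odot> y)"
  using cay by (simp add: cayley_algebra_def bilinear_map_def)
lemma lin_r: "Vector_Spaces.linear sc sc (\<lambda>x. x \<odot> y)"
  using cay by (simp add: cayley_algebra_def bilinear_map_def)

lemma ml_add: "x \<odot> (y + z) = x \<odot> y + x \<odot> z"
  using lin_l[of x] by (simp add: Vector_Spaces.linear_iff)
lemma mr_add: "(x + y) \<odot> z = x \<odot> z + y \<odot> z"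
  using lin_r[of z] by (simp add: Vector_Spaces.linear_iff)
lemma ml_scale: "x \<odot> (c *s y) = c *s (x \<odot> y)"
  using lin_l[of x] by (simp add: Vector_Spaces.linear_iff)
lemma mr_scale: "(c *s x) \<odot> y = c *s (x \<odot> y)"
  using lin_r[of y] by (simp add: Vector_Spaces.linear_iff)

lemma ml_zero: "x \<odot> 0 = 0" and ml_minus: "x \<odot> (- y) = - (x \<odot> y)" and ml_diff: "x \<odot> (y - z) = x \<odot> y - x \<odot> z"
proof -
  interpret additive "\<lambda>y. x \<odot> y" by standard (rule ml_add)
  show "x \<odot> 0 = 0" by (rule zero)
  show "x \<odot> (- y) = - (x \<odot> y)" by (rule minus)
  show "x \<odot> (y - z) = x \<odot> y - x \<odot> z" by (rule diff)
qed

lemma mr_zero: "0 \<odot> x = 0" and mr_minus: "(- y) \<odot> x = - (y \<odot> x)" and mr_diff: "(y - z) \<odot> x = y \<odot> x - z \<odot> x"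
proof -
  interpret additive "\<lambda>y. y \<odot> x" by standard (rule mr_add)
  show "0 \<odot> x = 0" by (rule zero)
  show "(- y) \<odot> x = - (y \<odot> x)" by (rule minus)
  show "(y - z) \<odot> x = y \<odot> x - z \<odot> x" by (rule diff)
qed

lemma unit_l[simp]: "e \<odot> x = x" and unit_r[simp]: "x \<odot> e = x"
  using cay by (simp_all add: cayley_algebra_def)

abbreviation p :: "'v \<Rightarrow> 'v \<Rightarrow> 'a" where "p \<equiv> polar n"

lemma qf: "quadratic_form sc n" using cay by (simp add: cayley_algebra_def)

lemma n_scale: "n (c *s x) = c * c * n x" using qf by (simp add: quadratic_form_def)

lemma pl_lin: "Vector_Spaces.linear sc (*) (\<lambda>y. p x y)"
  using qf by (simp add: quadratic_form_def bilinear_map_def)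
lemma pr_lin: "Vector_Spaces.linear sc (*) (\<lambda>x. p x y)"
  using qf by (simp add: quadratic_form_def bilinear_map_def)

lemma p_addr: "p x (y + z) = p x y + p x z"
  using pl_lin[of x] by (simp add: Vector_Spaces.linear_iff)
lemma p_addl: "p (x + y) z = p x z + p y z"
  using pr_lin[of z] by (simp add: Vector_Spaces.linear_iff)
lemma p_scaler: "p x (c *s y) = c * p x y"
  using pl_lin[of x] by (simp add: Vector_Spaces.linear_iff)
lemma p_scalel: "p (c *s x) y = c * p x y"
  using pr_lin[of y] by (simp add: Vector_Spaces.linear_iff)

lemma p_zeror: "p x 0 = 0" and p_minusr: "p x (- y) = - p x y" and p_diffr: "p x (y - z) = p x y - p x z"
proof -
  interpret additive "\<lambda>y. p x y" by standard (rule p_addr)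
  show "p x 0 = 0" by (rule zero)
  show "p x (- y) = - p x y" by (rule minus)
  show "p x (y - z) = p x y - p x z" by (rule diff)
qed

lemma p_zerol: "p 0 x = 0" and p_minusl: "p (- y) x = - p y x" and p_diffl: "p (y - z) x = p y x - p z x"
proof -
  interpret additive "\<lambda>y. p y x" by standard (rule p_addl)
  show "p 0 x = 0" by (rule zero)
  show "p (- y) x = - p y x" by (rule minus)
  show "p (y - z) x = p y x - p z x" by (rule diff)
qed

lemma p_sym: "p x y = p y x" by (simp add: polar_def algebra_simps)

lemma n_zero[simp]: "n 0 = 0" using n_scale[of 0 0] by simp

lemma n_add: "n (x + y) = n x + n y + p x y" by (simp add: polar_def)

lemma two_sc: "x + x = (2::'a) *s x"
  by (metis one_add_one vs.scale_left_distrib vs.scale_one)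

lemma p_self: "p x x = 2 * n x"
  using n_add[of x x] n_scale[of 2 x] by (simp add: two_sc)

lemma n_minus[simp]: "n (- x) = n x"
  using n_scale[of "-1" x] by simp

lemma n_mult: "n (x \<odot> y) = n x * n y" using cay by (simp add: cayley_algebra_def)

lemma nondeg: "(\<And>y. p x y = 0) \<Longrightarrow> x = 0" using cay by (simp add: cayley_algebra_def)

lemma ext_p: "(\<And>z. p x z = p y z) \<Longrightarrow> x = y"
  using nondeg[of "x - y"] by (simp add: p_diffl)

lemmas lin = ml_add mr_add ml_scale mr_scale ml_zero mr_zero ml_minus mr_minus ml_diff mr_diff
  p_addr p_addl p_scaler p_scalel p_zeror p_zerol p_minusr p_minusl p_diffr p_diffl
  vs.scale_right_distrib vs.scale_left_distrib vs.scale_right_diff_distrib vs.scale_left_diff_distrib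

end

context cay
begin

definition t :: "'v \<Rightarrow> 'a" where "t x = p x e"
definition cj :: "'v \<Rightarrow> 'v" where "cj x = t x *s e - x"

lemma n_e: "n e = 1"
proof (rule ccontr)
  assume ne: "n e \<noteq> 1"
  have "n e = n e * n e" using n_mult[of e e] by simp
  with ne have n0: "n e = 0"
    by (metis mult_cancel_right1 mult_eq_0_iff)
  have "\<And>x. n x = 0" using n_mult[of _ e] n0 by simp
  then have "\<And>x y. p x y = 0" by (simp add: polar_def)
  then have "\<And>x::'v. x = 0" using nondeg by metis
  then have "UNIV \<subseteq> vs.span {}" by auto
  then have "vs.dim (UNIV::'v set) \<le> card ({}::'v set)" by (rule vs.dim_le_card) auto
  then show False using dim8 by simp
qed

lemma e_ne: "e \<noteq> 0" using n_e by auto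

lemma t_e[simp]: "t e = 2" by (simp add: t_def p_self n_e)
lemma t_add: "t (x + y) = t x + t y" by (simp add: t_def lin)
lemma t_scale: "t (c *s x) = c * t x" by (simp add: t_def lin)
lemma t_diff: "t (x - y) = t x - t y" by (simp add: t_def lin)
lemma t_minus: "t (- x) = - t x" by (simp add: t_def lin)
lemma t_zero[simp]: "t 0 = 0" by (simp add: t_def lin)

lemma P1: "p (x \<odot> y) (x \<odot> z) = n x * p y z"
proof -
  have "n (x \<odot> (y + z)) = n x * n (y + z)" by (rule n_mult)
  then show ?thesis by (simp add: lin n_add n_mult algebra_simps)
qed

lemma P2: "p (x \<odot> z) (y \<odot> z) = p x y * n z"
proof -
  have "n ((x + y) \<odot> z) = n (x + y) * n z" by (rule n_mult)
  then show ?thesis by (simp add: lin n_add n_mult algebra_simps)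
qed

lemma P3: "p (x \<odot> y) (w \<odot> z) + p (w \<odot> y) (x \<odot> z) = p x w * p y z"
proof -
  have "p ((x + w) \<odot> y) ((x + w) \<odot> z) = n (x + w) * p y z" by (rule P1)
  moreover have "p ((x + w) \<odot> y) ((x + w) \<odot> z) = n x * p y z + p (x \<odot> y) (w \<odot> z) + p (w \<odot> y) (x \<odot> z) + n w * p y z"
    by (simp add: lin P1)
  ultimately show ?thesis by (simp add: n_add algebra_simps p_sym[of x w])
qed

lemma cj_mult_l: "cj x \<odot> z = t x *s z - x \<odot> z" by (simp add: cj_def lin)
lemma cj_mult_r: "z \<odot> cj x = t x *s z - z \<odot> x" by (simp add: cj_def lin)

lemma A1: "p (x \<odot> y) z = p y (cj x \<odot> z)"
proof -
  have "p (x \<odot> y) (e \<odot> z) + p (e \<odot> y) (x \<odot> z) = p x e * p y z" by (rule P3)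
  then show ?thesis by (simp add: cj_mult_l lin t_def eq_diff_eq)
qed

lemma A2: "p (x \<odot> y) z = p x (z \<odot> cj y)"
proof -
  have "p (x \<odot> y) (z \<odot> e) + p (z \<odot> y) (x \<odot> e) = p x z * p y e" by (rule P3)
  then show ?thesis by (simp add: cj_mult_r lin t_def p_sym[of "z \<odot> y"] mult.commute eq_diff_eq)
qed

lemma t_cj: "t (cj x) = t x" by (simp add: cj_def t_diff t_scale algebra_simps)
lemma cj_cj[simp]: "cj (cj x) = x" unfolding cj_def[of "cj x"] t_cj by (simp add: cj_def)
lemma cj_e[simp]: "cj e = e" by (simp add: cj_def two_sc[symmetric])
lemma cj_add: "cj (x + y) = cj x + cj y" by (simp add: cj_def t_add lin)
lemma cj_scale: "cj (c *s x) = c *s cj x" by (simp add: cj_def t_scale lin)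
lemma cj_diff: "cj (x - y) = cj x - cj y" by (simp add: cj_def t_diff lin)
lemma cj_minus: "cj (- x) = - cj x" by (simp add: cj_def t_minus lin)
lemma cj_zero[simp]: "cj 0 = 0" by (simp add: cj_def)

lemma n_cj: "n (cj x) = n x"
proof -
  have "n (cj x) = n (t x *s e) + n x - p (t x *s e) x"
    unfolding cj_def using n_add[of "t x *s e - x" x] n_add[of "t x *s e" "- x"]
    by (simp add: lin)
  then show ?thesis by (simp add: n_scale n_e lin p_sym[of e] t_def[symmetric])
qed

lemma p_cj: "p (cj x) (cj y) = p x y"
  by (simp add: cj_def lin p_self n_e t_def p_sym[of e] algebra_simps)

lemma K1: "cj x \<odot> (x \<odot> y) = n x *s y"
proof (rule ext_p)
  fix z
  have "p (cj x \<odot> (x \<odot> y)) z = p (x \<odot> y) (cj (cj x) \<odot> z)" by (rule A1)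
  also have "\<dots> = n x * p y z" by (simp add: P1)
  finally show "p (cj x \<odot> (x \<odot> y)) z = p (n x *s y) z" by (simp add: lin)
qed

lemma K2: "(y \<odot> x) \<odot> cj x = n x *s y"
proof (rule ext_p)
  fix z
  have "p ((y \<odot> x) \<odot> cj x) z = p (y \<odot> x) (z \<odot> cj (cj x))" by (rule A2)
  also have "\<dots> = p y z * n x" by (simp add: P2)
  finally show "p ((y \<odot> x) \<odot> cj x) z = p (n x *s y) z" by (simp add: lin mult.commute)
qed

lemma Q: "x \<odot> x = t x *s x - n x *s e"
proof (rule ext_p)
  fix z
  have "p (x \<odot> x) z = p x (cj x \<odot> z)" by (rule A1)
  also have "\<dots> = t x * p x z - p (x \<odot> e) (x \<odot> z)" by (simp add: cj_mult_l lin)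
  also have "\<dots> = t x * p x z - n x * p e z" by (simp only: P1)
  finally show "p (x \<odot> x) z = p (t x *s x - n x *s e) z" by (simp add: lin)
qed

lemma Qlin: "x \<odot> y + y \<odot> x = t x *s y + t y *s x - p x y *s e"
proof -
  have "(x + y) \<odot> (x + y) = t (x + y) *s (x + y) - n (x + y) *s e" by (rule Q)
  then have "x \<odot> x + y \<odot> y + (x \<odot> y + y \<odot> x) = t x *s x - n x *s e + (t y *s y - n y *s e)
     + (t x *s y + t y *s x - p x y *s e)"
    by (simp add: lin t_add n_add algebra_simps)
  then show ?thesis by (simp add: Q[of x] Q[of y])
qed

lemma t_mult: "t (x \<odot> y) = t x * t y - p x y"
proof -
  have "t (x \<odot> y) = p y (cj x \<odot> e)" by (simp add: t_def A1)
  also have "\<dots> = t x * t y - p y x" by (simp add: cj_def lin t_def p_sym[of y e])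
  finally show ?thesis by (simp add: p_sym)
qed

lemma CJ: "cj (x \<odot> y) = cj y \<odot> cj x"
proof -
  have "cj y \<odot> cj x = (t y * t x) *s e - t y *s x - t x *s y + y \<odot> x"
    by (simp add: cj_def lin algebra_simps)
  also have "y \<odot> x = t x *s y + t y *s x - p x y *s e - x \<odot> y"
    using Qlin[of x y] by (simp add: algebra_simps)
  finally show ?thesis by (simp add: cj_def t_mult lin algebra_simps)
qed

lemma LA: "x \<odot> (x \<odot> y) = (x \<odot> x) \<odot> y"
proof -
  have "cj x \<odot> (x \<odot> y) = n x *s y" by (rule K1)
  then have "x \<odot> (x \<odot> y) = t x *s (x \<odot> y) - n x *s y" by (simp add: cj_mult_l algebra_simps)
  then show ?thesis by (simp add: Q lin)
qed

lemma RA: "(y \<odot> x) \<odot> x = y \<odot> (x \<odot> x)"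
proof -
  have "(y \<odot> x) \<odot> cj x = n x *s y" by (rule K2)
  then have "(y \<odot> x) \<odot> x = t x *s (y \<odot> x) - n x *s y" by (simp add: cj_mult_r algebra_simps)
  then show ?thesis by (simp add: Q lin)
qed

lemma K1lin: "cj x \<odot> (y \<odot> z) + cj y \<odot> (x \<odot> z) = p x y *s z"
proof -
  have "cj (x + y) \<odot> ((x + y) \<odot> z) = n (x + y) *s z" by (rule K1)
  then show ?thesis by (simp add: cj_add lin n_add K1 algebra_simps)
qed

lemma K2lin: "(z \<odot> x) \<odot> cj y + (z \<odot> y) \<odot> cj x = p x y *s z"
proof -
  have "(z \<odot> (x + y)) \<odot> cj (x + y) = n (x + y) *s z" by (rule K2)
  then show ?thesis by (simp add: cj_add lin n_add K2 algebra_simps)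
qed

end

context cay
begin

definition sub :: "'v set \<Rightarrow> bool" where
  "sub B \<longleftrightarrow> vs.subspace B \<and> e \<in> B \<and> (\<forall>x\<in>B. \<forall>y\<in>B. x \<odot> y \<in> B)"
definition nd :: "'v set \<Rightarrow> bool" where
  "nd B \<longleftrightarrow> (\<forall>x\<in>B. (\<forall>y\<in>B. p x y = 0) \<longrightarrow> x = 0)"
definition orth :: "'v set \<Rightarrow> 'v \<Rightarrow> bool" where
  "orth B v \<longleftrightarrow> (\<forall>b\<in>B. p v b = 0)"
definition dbl :: "'v set \<Rightarrow> 'v \<Rightarrow> 'v set" where
  "dbl B v = {a + b \<odot> v | a b. a \<in> B \<and> b \<in> B}"
definition iso :: "'v set \<Rightarrow> 'v set \<Rightarrow> ('v \<Rightarrow> 'v) \<Rightarrow> bool" where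
  "iso B B' f \<longleftrightarrow> (\<forall>x\<in>B. f x \<in> B') \<and> (\<forall>x\<in>B. \<forall>y\<in>B. f (x + y) = f x + f y) \<and>
     (\<forall>c. \<forall>x\<in>B. f (c *s x) = c *s f x) \<and> (\<forall>x\<in>B. \<forall>y\<in>B. f (x \<odot> y) = f x \<odot> f y) \<and>
     f e = e \<and> (\<forall>x\<in>B. n (f x) = n x)"

lemma sub_e: "sub B \<Longrightarrow> e \<in> B" by (simp add: sub_def)
lemma sub_mult: "sub B \<Longrightarrow> x \<in> B \<Longrightarrow> y \<in> B \<Longrightarrow> x \<odot> y \<in> B" by (simp add: sub_def)
lemma sub_add: "sub B \<Longrightarrow> x \<in> B \<Longrightarrow> y \<in> B \<Longrightarrow> x + y \<in> B" by (simp add: sub_def vs.subspace_add)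
lemma sub_diff: "sub B \<Longrightarrow> x \<in> B \<Longrightarrow> y \<in> B \<Longrightarrow> x - y \<in> B" by (simp add: sub_def vs.subspace_diff)
lemma sub_scale: "sub B \<Longrightarrow> x \<in> B \<Longrightarrow> c *s x \<in> B" by (simp add: sub_def vs.subspace_scale)
lemma sub_minus: "sub B \<Longrightarrow> x \<in> B \<Longrightarrow> - x \<in> B" by (simp add: sub_def vs.subspace_neg)
lemma sub_zero: "sub B \<Longrightarrow> 0 \<in> B" by (simp add: sub_def vs.subspace_0)
lemma sub_cj: "sub B \<Longrightarrow> x \<in> B \<Longrightarrow> cj x \<in> B"
  unfolding cj_def by (intro sub_diff sub_scale sub_e)

section \<open>Cayley-Dickson identities\<close>

context
  fixes B v assumes sB: "sub B" and oB: "orth B v"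
begin

lemma t_v: "t v = 0" using oB sB by (simp add: orth_def t_def sub_def)
lemma cj_v: "cj v = - v" by (simp add: cj_def t_v)

lemma vy: "y \<in> B \<Longrightarrow> v \<odot> y = cj y \<odot> v"
proof -
  assume y: "y \<in> B"
  have "v \<odot> y + y \<odot> v = t v *s y + t y *s v - p v y *s e" by (rule Qlin)
  moreover have "p v y = 0" using oB y by (simp add: orth_def)
  ultimately have "v \<odot> y = t y *s v - y \<odot> v" by (simp add: t_v eq_diff_eq)
  then show ?thesis by (simp add: cj_mult_l)
qed

lemma yv: "y \<in> B \<Longrightarrow> y \<odot> v = v \<odot> cj y"
  using vy[of "cj y"] sub_cj[OF sB] by simp

lemma R1: "a \<in> B \<Longrightarrow> b \<in> B \<Longrightarrow> a \<odot> (b \<odot> v) = (b \<odot> a) \<odot> v"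
proof -
  assume a: "a \<in> B" and b: "b \<in> B"
  have "cj (cj a) \<odot> (v \<odot> cj b) + cj v \<odot> (cj a \<odot> cj b) = p (cj a) v *s cj b" by (rule K1lin)
  moreover have "p (cj a) v = 0" using oB sub_cj[OF sB a] unfolding orth_def by (metis p_sym)
  ultimately have "a \<odot> (v \<odot> cj b) = v \<odot> (cj a \<odot> cj b)" by (simp add: cj_v lin eq_neg_iff_add_eq_0)
  also have "\<dots> = v \<odot> cj (b \<odot> a)" by (simp add: CJ)
  also have "\<dots> = (b \<odot> a) \<odot> v" using yv[of "b \<odot> a"] sub_mult[OF sB b a] by simp
  finally show ?thesis using yv[OF b] by simp
qed

lemma R2: "a \<in> B \<Longrightarrow> b \<in> B \<Longrightarrow> (a \<odot> v) \<odot> b = (a \<odot> cj b) \<odot> v"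
proof -
  assume a: "a \<in> B" and b: "b \<in> B"
  have "(a \<odot> v) \<odot> cj (cj b) + (a \<odot> cj b) \<odot> cj v = p v (cj b) *s a" by (rule K2lin)
  moreover have "p v (cj b) = 0" using oB sub_cj[OF sB b] by (simp add: orth_def)
  ultimately show ?thesis by (simp add: cj_v lin eq_neg_iff_add_eq_0)
qed

lemma R3: "a \<in> B \<Longrightarrow> b \<in> B \<Longrightarrow> (a \<odot> v) \<odot> (b \<odot> v) = - (n v *s (cj b \<odot> a))"
proof -
  assume a: "a \<in> B" and b: "b \<in> B"
  have cav: "cj (a \<odot> v) = - (a \<odot> v)"
    using vy[of "cj a"] sub_cj[OF sB a] by (simp add: CJ cj_v lin)
  have "cj (cj (a \<odot> v)) \<odot> (v \<odot> cj b) + cj v \<odot> (cj (a \<odot> v) \<odot> cj b) = p (cj (a \<odot> v)) v *s cj b"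
    by (rule K1lin)
  then have 1: "(a \<odot> v) \<odot> (v \<odot> cj b) + v \<odot> ((a \<odot> v) \<odot> cj b) = p (- (a \<odot> v)) v *s cj b"
    by (simp add: cav cj_v lin cj_minus)
  have 2: "p (- (a \<odot> v)) v = - (t a * n v)"
    using P2[of a v e] by (simp add: lin t_def)
  have 3: "(a \<odot> v) \<odot> cj b = (a \<odot> b) \<odot> v" using R2[OF a sub_cj[OF sB b]] by simp
  have 4: "v \<odot> ((a \<odot> b) \<odot> v) = - (n v *s cj (a \<odot> b))"
  proof -
    have "v \<odot> ((a \<odot> b) \<odot> v) = v \<odot> (v \<odot> cj (a \<odot> b))" using yv[OF sub_mult[OF sB a b]] by simp
    also have "\<dots> = (v \<odot> v) \<odot> cj (a \<odot> b)" by (rule LA)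
    also have "\<dots> = - (n v *s cj (a \<odot> b))" by (simp add: Q t_v lin)
    finally show ?thesis .
  qed
  have "(a \<odot> v) \<odot> (v \<odot> cj b) - n v *s cj (a \<odot> b) = - ((t a * n v) *s cj b)"
    using 1 2 3 4 by (simp add: eq_diff_eq[symmetric])
  then have "(a \<odot> v) \<odot> (v \<odot> cj b) = - ((t a * n v) *s cj b) + n v *s cj (a \<odot> b)"
    by (simp add: diff_eq_eq)
  also have "\<dots> = n v *s (cj b \<odot> cj a - t a *s cj b)" by (simp add: CJ lin mult.commute)
  also have "\<dots> = - (n v *s (cj b \<odot> a))" by (simp add: cj_mult_r lin)
  finally show ?thesis using yv[OF b] by simp
qed

lemma O1: "a \<in> B \<Longrightarrow> b \<in> B \<Longrightarrow> p a (b \<odot> v) = 0"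
proof -
  assume a: "a \<in> B" and b: "b \<in> B"
  have "p (b \<odot> v) a = p v (cj b \<odot> a)" by (rule A1)
  also have "\<dots> = 0" using oB sub_mult[OF sB sub_cj[OF sB b] a] by (simp add: orth_def)
  finally show ?thesis by (simp add: p_sym)
qed

lemma O2: "p (a \<odot> v) (b \<odot> v) = p a b * n v" by (rule P2)

lemma CDmult: "a \<in> B \<Longrightarrow> b \<in> B \<Longrightarrow> c \<in> B \<Longrightarrow> d \<in> B \<Longrightarrow>
  (a + b \<odot> v) \<odot> (c + d \<odot> v) = (a \<odot> c - n v *s (cj d \<odot> b)) + (d \<odot> a + b \<odot> cj c) \<odot> v"
  by (simp add: lin R1 R2 R3)

lemma n_dbl: "a \<in> B \<Longrightarrow> b \<in> B \<Longrightarrow> n (a + b \<odot> v) = n a + n b * n v"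
  by (simp add: n_add n_mult O1)

end

end

context cay
begin

lemma iso_zero: "iso B B' f \<Longrightarrow> sub B \<Longrightarrow> f 0 = 0"
  using sub_zero[of B] unfolding iso_def by (metis vs.scale_zero_left)
lemma iso_minus: "iso B B' f \<Longrightarrow> sub B \<Longrightarrow> x \<in> B \<Longrightarrow> f (- x) = - f x"
  unfolding iso_def by (metis vs.scale_minus_left vs.scale_one)
lemma iso_add: "iso B B' f \<Longrightarrow> x \<in> B \<Longrightarrow> y \<in> B \<Longrightarrow> f (x + y) = f x + f y"
  unfolding iso_def by blast
lemma iso_scale: "iso B B' f \<Longrightarrow> x \<in> B \<Longrightarrow> f (c *s x) = c *s f x"
  unfolding iso_def by blast
lemma iso_mult: "iso B B' f \<Longrightarrow> x \<in> B \<Longrightarrow> y \<in> B \<Longrightarrow> f (x \<odot> y) = f x \<odot> f y"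
  unfolding iso_def by blast
lemma iso_in: "iso B B' f \<Longrightarrow> x \<in> B \<Longrightarrow> f x \<in> B'"
  unfolding iso_def by blast
lemma iso_e: "iso B B' f \<Longrightarrow> f e = e"
  unfolding iso_def by blast
lemma iso_n: "iso B B' f \<Longrightarrow> x \<in> B \<Longrightarrow> n (f x) = n x"
  unfolding iso_def by blast
lemma iso_diff: "iso B B' f \<Longrightarrow> sub B \<Longrightarrow> x \<in> B \<Longrightarrow> y \<in> B \<Longrightarrow> f (x - y) = f x - f y"
  using iso_add[of B B' f x "- y"] iso_minus[of B B' f y] sub_minus[of B y] by simp
lemma iso_p: "iso B B' f \<Longrightarrow> sub B \<Longrightarrow> x \<in> B \<Longrightarrow> y \<in> B \<Longrightarrow> p (f x) (f y) = p x y"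
proof -
  assume a: "iso B B' f" "sub B" "x \<in> B" "y \<in> B"
  have "n (f (x + y)) = n (x + y)" using a iso_n[of B B' f "x + y"] sub_add[of B x y] by simp
  then show ?thesis unfolding polar_def using a iso_add[of B B' f x y] iso_n[of B B' f] by simp
qed
lemma iso_t: "iso B B' f \<Longrightarrow> sub B \<Longrightarrow> x \<in> B \<Longrightarrow> t (f x) = t x"
  unfolding t_def using iso_p[of B B' f x e] iso_e[of B B' f] sub_e[of B] by simp
lemma iso_cj: "iso B B' f \<Longrightarrow> sub B \<Longrightarrow> x \<in> B \<Longrightarrow> f (cj x) = cj (f x)"
  unfolding cj_def using iso_diff[of B B' f "t x *s e" x] iso_scale[of B B' f e "t x"] iso_e[of B B' f]
    sub_e[of B] sub_scale[of B e] iso_t[of B B' f x] by simp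

context
  fixes B v assumes sB: "sub B" and nB: "nd B" and oB: "orth B v" and nv: "n v \<noteq> 0"
begin

lemma mv_inj: "b \<odot> v = 0 \<Longrightarrow> b = 0"
  using K2[of b v] nv by (simp add: lin)

lemma decomp_unique:
  assumes "a \<in> B" "b \<in> B" "a2 \<in> B" "b2 \<in> B" "a + b \<odot> v = a2 + b2 \<odot> v"
  shows "a = a2 \<and> b = b2"
proof -
  have eq: "a - a2 = (b2 - b) \<odot> v" using assms(5) by (simp add: lin algebra_simps)
  have bb: "b2 - b \<in> B" using assms sB by (simp add: sub_diff)
  have "\<forall>c\<in>B. p (a - a2) c = 0"
    using O1[OF sB oB _ bb] eq by (simp add: p_sym)
  then have "a - a2 = 0" using nB sub_diff[OF sB assms(1,3)] unfolding nd_def by blast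
  then have "(b2 - b) \<odot> v = 0" using eq by simp
  then have "b2 - b = 0" by (rule mv_inj)
  with \<open>a - a2 = 0\<close> show ?thesis by simp
qed

lemma sub_dbl: "sub (dbl B v)"
  unfolding sub_def
proof (intro conjI ballI)
  show "vs.subspace (dbl B v)"
  proof (rule vs.subspaceI)
    show "0 \<in> dbl B v" unfolding dbl_def using sub_zero[OF sB] by (force simp: lin)
    show "x + y \<in> dbl B v" if xy: "x \<in> dbl B v" "y \<in> dbl B v" for x y
    proof -
      obtain a b where "a \<in> B" "b \<in> B" "x = a + b \<odot> v"
        using xy(1) unfolding dbl_def by blast
      moreover obtain c d where "c \<in> B" "d \<in> B" "y = c + d \<odot> v"
        using xy(2) unfolding dbl_def by blast
      ultimately have "x + y = (a + c) + (b + d) \<odot> v" "a + c \<in> B" "b + d \<in> B"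
        using sB by (auto simp: lin sub_add algebra_simps)
      then show ?thesis unfolding dbl_def by blast
    qed
    show "c *s x \<in> dbl B v" if xx: "x \<in> dbl B v" for c x
    proof -
      obtain a b where "a \<in> B" "b \<in> B" "x = a + b \<odot> v"
        using xx unfolding dbl_def by blast
      then have "c *s x = (c *s a) + (c *s b) \<odot> v" "c *s a \<in> B" "c *s b \<in> B"
        using sB by (auto simp: lin sub_scale)
      then show ?thesis unfolding dbl_def by blast
    qed
  qed
  show "e \<in> dbl B v" unfolding dbl_def using sub_zero[OF sB] sub_e[OF sB]
    by (force simp: lin)
  show "x \<odot> y \<in> dbl B v" if xy: "x \<in> dbl B v" "y \<in> dbl B v" for x y
  proof -
    obtain a b c d where abcd: "a \<in> B" "b \<in> B" "c \<in> B" "d \<in> B" "x = a + b \<odot> v" "y = c + d \<odot> v"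
      using xy unfolding dbl_def by blast
    have "x \<odot> y = (a \<odot> c - n v *s (cj d \<odot> b)) + (d \<odot> a + b \<odot> cj c) \<odot> v"
      using CDmult[OF sB oB abcd(1-4)] abcd by simp
    moreover have "a \<odot> c - n v *s (cj d \<odot> b) \<in> B" "d \<odot> a + b \<odot> cj c \<in> B"
      using abcd sB by (auto intro!: sub_diff sub_add sub_mult sub_scale sub_cj)
    ultimately show ?thesis unfolding dbl_def by blast
  qed
qed

lemma B_dbl: "a \<in> B \<Longrightarrow> a \<in> dbl B v"
  unfolding dbl_def using sub_zero[OF sB] by (force simp: lin)

lemma v_dbl: "v \<in> dbl B v"
  unfolding dbl_def using sub_zero[OF sB] sub_e[OF sB] by (force simp: lin)

lemma nd_dbl: "nd (dbl B v)"
  unfolding nd_def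
proof (intro ballI impI)
  fix x assume x: "x \<in> dbl B v" and h: "\<forall>y\<in>dbl B v. p x y = 0"
  obtain a b where ab: "a \<in> B" "b \<in> B" "x = a + b \<odot> v" using x unfolding dbl_def by blast
  have "\<forall>c\<in>B. p a c = 0"
  proof
    fix c assume c: "c \<in> B"
    have "p x c = 0" using h B_dbl[OF c] by blast
    then show "p a c = 0" using O1[OF sB oB c ab(2)] ab by (simp add: lin p_sym)
  qed
  then have a0: "a = 0" using nB ab(1) by (simp add: nd_def)
  have "\<forall>d\<in>B. p b d = 0"
  proof
    fix d assume d: "d \<in> B"
    have "d \<odot> v \<in> dbl B v" unfolding dbl_def using d sub_zero[OF sB] by force
    then have "p x (d \<odot> v) = 0" using h by blast
    then have "p b d * n v = 0" using a0 ab by (simp add: O2[OF sB oB])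
    then show "p b d = 0" using nv by simp
  qed
  then have "b = 0" using nB ab(2) by (simp add: nd_def)
  with a0 ab show "x = 0" by (simp add: lin)
qed

definition ext :: "('v \<Rightarrow> 'v) \<Rightarrow> 'v \<Rightarrow> 'v \<Rightarrow> 'v" where
  "ext f v' x = (SOME y. \<exists>a\<in>B. \<exists>b\<in>B. x = a + b \<odot> v \<and> y = f a + f b \<odot> v')"

lemma ext_eq: "a \<in> B \<Longrightarrow> b \<in> B \<Longrightarrow> ext f v' (a + b \<odot> v) = f a + f b \<odot> v'"
  unfolding ext_def
proof (rule some_equality)
  assume "a \<in> B" "b \<in> B"
  then show "\<exists>a2\<in>B. \<exists>b2\<in>B. a + b \<odot> v = a2 + b2 \<odot> v \<and> f a + f b \<odot> v' = f a2 + f b2 \<odot> v'" by blast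
next
  fix y assume ab: "a \<in> B" "b \<in> B" and "\<exists>a2\<in>B. \<exists>b2\<in>B. a + b \<odot> v = a2 + b2 \<odot> v \<and> y = f a2 + f b2 \<odot> v'"
  then obtain a2 b2 where "a2 \<in> B" "b2 \<in> B" "a + b \<odot> v = a2 + b2 \<odot> v" "y = f a2 + f b2 \<odot> v'" by blast
  with decomp_unique[OF ab this(1,2,3)] show "y = f a + f b \<odot> v'" by simp
qed

context
  fixes B' v' f assumes sB': "sub B'" and nB': "nd B'" and oB': "orth B' v'" and nv': "n v' = n v"
    and iso: "iso B B' f"
begin

lemma ext_B: "a \<in> B \<Longrightarrow> ext f v' a = f a"
  using ext_eq[of a 0 f v'] sub_zero[OF sB] iso_zero[OF iso sB] by (simp add: lin)

lemma ext_v: "ext f v' v = v'"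
  using ext_eq[of 0 e f v'] sub_zero[OF sB] sub_e[OF sB] iso_zero[OF iso sB] iso_e[OF iso] by simp

lemma iso_ext: "iso (dbl B v) (dbl B' v') (ext f v')"
  unfolding iso_def
proof (intro conjI ballI allI)
  fix x assume "x \<in> dbl B v"
  then obtain a b where ab: "a \<in> B" "b \<in> B" "x = a + b \<odot> v" unfolding dbl_def by blast
  have "ext f v' x = f a + f b \<odot> v'" using ab ext_eq by simp
  then show "ext f v' x \<in> dbl B' v'" unfolding dbl_def using iso_in[OF iso] ab by blast
  show "n (ext f v' x) = n x"
    using ab ext_eq n_dbl[OF sB oB] n_dbl[OF sB' oB'] iso_in[OF iso] iso_n[OF iso] nv' by simp
  fix c show "ext f v' (c *s x) = c *s ext f v' x"
  proof -
    have "c *s x = c *s a + (c *s b) \<odot> v" using ab by (simp add: lin)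
    then have "ext f v' (c *s x) = f (c *s a) + f (c *s b) \<odot> v'"
      using ab ext_eq sub_scale[OF sB] by simp
    then show ?thesis using ab ext_eq iso_scale[OF iso] by (simp add: lin)
  qed
next
  fix x y assume "x \<in> dbl B v" "y \<in> dbl B v"
  then obtain a b c d where abcd: "a \<in> B" "b \<in> B" "c \<in> B" "d \<in> B" "x = a + b \<odot> v" "y = c + d \<odot> v"
    unfolding dbl_def by blast
  have xy0: "x + y = (a + c) + (b + d) \<odot> v" using abcd by (simp add: lin algebra_simps)
  have "ext f v' (x + y) = f (a + c) + f (b + d) \<odot> v'"
    unfolding xy0 by (rule ext_eq) (use abcd sub_add[OF sB] in auto)
  then show "ext f v' (x + y) = ext f v' x + ext f v' y"
    using abcd ext_eq iso_add[OF iso] by (simp add: lin algebra_simps)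
  have xy: "x \<odot> y = (a \<odot> c - n v *s (cj d \<odot> b)) + (d \<odot> a + b \<odot> cj c) \<odot> v"
    using CDmult[OF sB oB abcd(1-4)] abcd by simp
  have i1: "a \<odot> c - n v *s (cj d \<odot> b) \<in> B" "d \<odot> a + b \<odot> cj c \<in> B"
    using abcd sB by (auto intro!: sub_diff sub_add sub_mult sub_scale sub_cj)
  have "ext f v' (x \<odot> y) = f (a \<odot> c - n v *s (cj d \<odot> b)) + f (d \<odot> a + b \<odot> cj c) \<odot> v'"
    using xy i1 ext_eq by simp
  also have "\<dots> = (f a \<odot> f c - n v *s (cj (f d) \<odot> f b)) + (f d \<odot> f a + f b \<odot> cj (f c)) \<odot> v'"
    using abcd sB
    by (simp add: iso_diff[OF iso sB] iso_add[OF iso] iso_scale[OF iso] iso_mult[OF iso] iso_cj[OF iso sB]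
        sub_mult sub_scale sub_cj)
  also have "\<dots> = (f a + f b \<odot> v') \<odot> (f c + f d \<odot> v')"
    using CDmult[OF sB' oB', of "f a" "f b" "f c" "f d"] iso_in[OF iso] abcd nv' by simp
  finally show "ext f v' (x \<odot> y) = ext f v' x \<odot> ext f v' y"
    using abcd ext_eq by simp
next
  show "ext f v' e = e" using ext_B[of e] sub_e[OF sB] iso_e[OF iso] by simp
qed

end
end

end

context cay
begin

definition disc :: "'v \<Rightarrow> 'a" where "disc u = 4 * n u - t u * t u"

lemma n_se: "n (c *s e) = c * c" by (simp add: n_scale n_e)
lemma t_se: "t (c *s e) = 2 * c" by (simp add: t_scale)

lemma n_lin2: "n (a *s e + b *s u) = a * a + a * b * t u + b * b * n u"
  by (simp add: n_add n_scale n_e lin t_def p_sym[of e])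

lemma disc_ne_notin: "disc u \<noteq> 0 \<Longrightarrow> u \<noteq> c *s e"
  by (auto simp: disc_def n_se t_se algebra_simps)

lemma span_eu: "vs.span {e, u} = {a *s e + b *s u | a b. True}"
proof -
  have "vs.span {e, u} = {x. \<exists>k. x - k *s e \<in> range (\<lambda>k. k *s u)}"
    unfolding vs.span_insert[of e "{u}"] vs.span_singleton by auto
  also have "\<dots> = {a *s e + b *s u | a b. True}"
  proof (intro set_eqI iffI)
    fix x assume "x \<in> {x. \<exists>k. x - k *s e \<in> range (\<lambda>k. k *s u)}"
    then obtain k kk where "x - k *s e = kk *s u" by auto
    then have "x = k *s e + kk *s u" by (simp add: diff_eq_eq add.commute)
    then show "x \<in> {a *s e + b *s u | a b. True}" by blast
  next
    fix x assume "x \<in> {a *s e + b *s u | a b. True}"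
    then obtain a b where "x = a *s e + b *s u" by blast
    then have "x - a *s e = b *s u" by simp
    then show "x \<in> {x. \<exists>k. x - k *s e \<in> range (\<lambda>k. k *s u)}" by (metis (mono_tags) mem_Collect_eq rangeI)
  qed
  finally show ?thesis .
qed

lemma mem_K: "x \<in> vs.span {e, u} \<longleftrightarrow> (\<exists>a b. x = a *s e + b *s u)"
  by (simp add: span_eu)

lemma coeff_unique:
  assumes "disc u \<noteq> 0" "a *s e + b *s u = a2 *s e + b2 *s u"
  shows "a = a2 \<and> b = b2"
proof -
  have h: "(b - b2) *s u = (a2 - a) *s e" using assms(2) by (simp add: algebra_simps)
  have "b = b2"
  proof (rule ccontr)
    assume "b \<noteq> b2"
    then have "u = ((a2 - a) / (b - b2)) *s e"
      using h by (metis (no_types, lifting) divide_inverse_commute eq_iff_diff_eq_0 vs.scale_scale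
        left_inverse mult.commute vs.scale_one)
    with disc_ne_notin[OF assms(1)] show False by blast
  qed
  with h show ?thesis using e_ne by simp
qed

lemma uu: "u \<odot> u = t u *s u - n u *s e" by (rule Q)

lemma sub_K: "sub (vs.span {e, u})"
  unfolding sub_def
proof (intro conjI ballI)
  show "vs.subspace (vs.span {e, u})" by simp
  show "e \<in> vs.span {e, u}" by (simp add: vs.span_base)
  fix x y assume "x \<in> vs.span {e, u}" "y \<in> vs.span {e, u}"
  then obtain a b c d where "x = a *s e + b *s u" "y = c *s e + d *s u" by (auto simp: mem_K)
  then have "x \<odot> y = (a * c - b * d * n u) *s e + (a * d + b * c + b * d * t u) *s u"
    by (simp add: lin uu algebra_simps)
  then show "x \<odot> y \<in> vs.span {e, u}" by (auto simp: mem_K)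
qed

lemma nd_K: assumes "disc u \<noteq> 0" shows "nd (vs.span {e, u})"
  unfolding nd_def
proof (intro ballI impI)
  fix x assume "x \<in> vs.span {e, u}" and h: "\<forall>y\<in>vs.span {e, u}. p x y = 0"
  then obtain a b where x: "x = a *s e + b *s u" by (auto simp: mem_K)
  have "p x e = 0" "p x u = 0" using h by (auto simp: vs.span_base)
  moreover have "p x e = 2 * a + b * t u" by (simp add: x lin p_self n_e t_def mult.commute)
  moreover have "p x u = a * t u + 2 * b * n u"
    by (simp add: x lin p_self t_def p_sym[of e u] algebra_simps)
  ultimately have h1: "2 * a + b * t u = 0" "a * t u + 2 * b * n u = 0" by simp_all
  have "a * disc u = 0"
  proof -
    have "a * disc u = 2 * n u * (2 * a + b * t u) - t u * (a * t u + 2 * b * n u)"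
      by (simp add: disc_def algebra_simps)
    then show ?thesis using h1 by simp
  qed
  moreover have "b * disc u = 0"
  proof -
    have "b * disc u = 2 * (a * t u + 2 * b * n u) - t u * (2 * a + b * t u)"
      by (simp add: disc_def algebra_simps)
    then show ?thesis using h1 by simp
  qed
  ultimately show "x = 0" using assms x by simp
qed

definition hasproj :: "'v set \<Rightarrow> bool" where
  "hasproj B \<longleftrightarrow> (\<forall>c. \<exists>b\<in>B. \<forall>d\<in>B. p (c - b) d = 0)"

lemma hasproj_K: assumes "disc u \<noteq> 0" shows "hasproj (vs.span {e, u})"
  unfolding hasproj_def
proof
  fix c
  define D where "D = disc u"
  define a where "a = (2 * n u * p c e - t u * p c u) / D"
  define b where "b = (2 * p c u - t u * p c e) / D"
  have D: "D \<noteq> 0" using assms by (simp add: D_def)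
  have e1: "2 * a + b * t u = p c e"
    using D unfolding a_def b_def by (simp add: field_simps) (simp add: D_def disc_def algebra_simps)
  have e2: "a * t u + 2 * b * n u = p c u"
    using D unfolding a_def b_def by (simp add: field_simps) (simp add: D_def disc_def algebra_simps)
  let ?b = "a *s e + b *s u"
  have "p ?b e = 2 * a + b * t u" by (simp add: lin p_self n_e t_def mult.commute)
  moreover have "p ?b u = a * t u + 2 * b * n u"
    by (simp add: lin p_self t_def p_sym[of e u] algebra_simps)
  ultimately have "p (c - ?b) e = 0" "p (c - ?b) u = 0"
    using e1 e2 by (simp_all add: lin)
  then have "\<forall>d\<in>vs.span {e, u}. p (c - ?b) d = 0" by (auto simp: mem_K lin algebra_simps p_sym[of u e])
  moreover have "?b \<in> vs.span {e, u}" by (auto simp: mem_K)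
  ultimately show "\<exists>b\<in>vs.span {e, u}. \<forall>d\<in>vs.span {e, u}. p (c - b) d = 0" by blast
qed

lemma hasproj_dbl:
  assumes sB: "sub B" and oB: "orth B v" and nv: "n v \<noteq> 0" and hB: "hasproj B"
  shows "hasproj (dbl B v)"
  unfolding hasproj_def
proof
  fix c
  obtain b1 where b1: "b1 \<in> B" "\<forall>d\<in>B. p (c - b1) d = 0" using hB unfolding hasproj_def by blast
  obtain r where r: "r \<in> B" "\<forall>d\<in>B. p (c \<odot> cj v - r) d = 0" using hB unfolding hasproj_def by blast
  define b2 where "b2 = (1 / n v) *s r"
  have b2: "b2 \<in> B" using sB r by (simp add: b2_def sub_scale)
  have "\<forall>y\<in>dbl B v. p (c - (b1 + b2 \<odot> v)) y = 0"
  proof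
    fix y assume "y \<in> dbl B v"
    then obtain a d where ad: "a \<in> B" "d \<in> B" "y = a + d \<odot> v" unfolding dbl_def by blast
    have 1: "p (c - b1) a = 0" using b1 ad by blast
    have 2: "p (b2 \<odot> v) a = 0" using O1[OF sB oB ad(1) b2] by (simp add: p_sym)
    have 3: "p c (d \<odot> v) = p r d"
    proof -
      have "p c (d \<odot> v) = p (d \<odot> v) c" by (simp add: p_sym)
      also have "\<dots> = p d (c \<odot> cj v)" by (rule A2)
      also have "\<dots> = p r d" using r ad by (simp add: lin p_sym)
      finally show ?thesis .
    qed
    have 4: "p b1 (d \<odot> v) = 0" using O1[OF sB oB b1(1) ad(2)] .
    have 5: "p (b2 \<odot> v) (d \<odot> v) = p r d" using nv by (simp add: P2 b2_def lin)
    show "p (c - (b1 + b2 \<odot> v)) y = 0"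
      using 1 2 3 4 5 ad by (simp add: lin algebra_simps)
  qed
  moreover have "b1 + b2 \<odot> v \<in> dbl B v" using b1 b2 unfolding dbl_def by blast
  ultimately show "\<exists>b\<in>dbl B v. \<forall>d\<in>dbl B v. p (c - b) d = 0" by blast
qed

lemma aniso:
  assumes sB: "sub B" and hB: "hasproj B" and ne: "B \<noteq> UNIV"
  shows "\<exists>w. orth B w \<and> n w \<noteq> 0"
proof -
  obtain y where y: "y \<notin> B" using ne by blast
  obtain py where py: "py \<in> B" "\<forall>d\<in>B. p (y - py) d = 0" using hB unfolding hasproj_def by blast
  define s where "s = y - py"
  have s0: "s \<noteq> 0" using y py by (auto simp: s_def)
  have so: "orth B s" using py by (simp add: s_def orth_def)
  obtain c where c: "p s c \<noteq> 0" using nondeg s0 by blast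
  obtain pc where pc: "pc \<in> B" "\<forall>d\<in>B. p (c - pc) d = 0" using hB unfolding hasproj_def by blast
  define c' where "c' = c - pc"
  have co: "orth B c'" using pc by (simp add: c'_def orth_def)
  have "p s pc = 0" using so pc by (simp add: orth_def)
  then have sc: "p s c' \<noteq> 0" using c by (simp add: c'_def lin)
  have soc: "orth B (s + c')" using so co by (simp add: orth_def lin)
  show ?thesis
  proof (cases "n s = 0")
    case False then show ?thesis using so by blast
  next
    case True
    show ?thesis
    proof (cases "n c' = 0")
      case False then show ?thesis using co by blast
    next
      case False': True
      have "n (s + c') \<noteq> 0" using True False' sc by (simp add: n_add)
      then show ?thesis using soc by blast
    qed
  qed
qed

end

context cay
begin

definition bas :: "'v set" where
  "bas = (SOME B. vs.independent B \<and> vs.span B = UNIV \<and> finite B)"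

lemma bas: "vs.independent bas \<and> vs.span bas = UNIV \<and> finite bas"
proof -
  obtain B where B: "vs.independent B" "UNIV \<subseteq> vs.span B" "card B = vs.dim (UNIV::'v set)"
    using vs.basis_exists[of UNIV] by blast
  then have "finite B" using dim8 by (metis card.infinite zero_neq_numeral)
  then have "\<exists>B. vs.independent B \<and> vs.span B = UNIV \<and> finite B" using B by blast
  then show ?thesis unfolding bas_def by (rule someI_ex)
qed

sublocale fd: finite_dimensional_vector_space sc bas
  by unfold_locales (use bas in auto)

lemma dim_K: assumes "disc u \<noteq> 0" shows "vs.dim (vs.span {e, u}) = 2"
proof -
  have u0: "u \<noteq> 0" using disc_ne_notin[OF assms, of 0] by simp
  have "e \<notin> vs.span {u}"
  proof
    assume "e \<in> vs.span {u}"
    then obtain k where k: "e = k *s u" by (auto simp: vs.span_singleton)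
    then have "k \<noteq> 0" using e_ne by auto
    then have "u = (1 / k) *s e" using k by simp
    then show False using disc_ne_notin[OF assms] by blast
  qed
  then have "vs.dim (insert e {u}) = vs.dim {u} + 1" by (simp add: fd.dim_insert)
  then show ?thesis using u0 by (simp add: vs.dim_span)
qed

lemma mv_inj2: "n v \<noteq> 0 \<Longrightarrow> x \<odot> v = y \<odot> v \<Longrightarrow> x = y"
proof -
  assume nv: "n v \<noteq> 0" and h: "x \<odot> v = y \<odot> v"
  have "(x - y) \<odot> v = 0" using h by (simp add: lin)
  then have "((x - y) \<odot> v) \<odot> cj v = 0" by (simp add: lin)
  then have "n v *s (x - y) = 0" by (simp add: K2)
  then show "x = y" using nv by simp
qed

lemma dim_dbl:
  assumes sB: "sub B" and nB: "nd B" and oB: "orth B v" and nv: "n v \<noteq> 0"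
  shows "vs.dim (dbl B v) = 2 * vs.dim B"
proof -
  interpret fdp: finite_dimensional_vector_space_pair_1 sc bas sc by unfold_locales
  let ?T = "(\<lambda>b. b \<odot> v) ` B"
  have subB: "vs.subspace B" using sB by (simp add: sub_def)
  have subT: "vs.subspace ?T"
  proof (rule vs.subspaceI)
    show "0 \<in> ?T" using sub_zero[OF sB] by (force simp: lin)
    show "x + y \<in> ?T" if "x \<in> ?T" "y \<in> ?T" for x y
      using that sub_add[OF sB] by (force simp: lin)
    show "c *s x \<in> ?T" if "x \<in> ?T" for c x
      using that sub_scale[OF sB] by (force simp: lin)
  qed
  have eq: "dbl B v = {x + y |x y. x \<in> B \<and> y \<in> ?T}" unfolding dbl_def by blast
  have int: "B \<inter> ?T \<subseteq> {0}"
  proof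
    fix x assume "x \<in> B \<inter> ?T"
    then obtain b where b: "b \<in> B" "x = b \<odot> v" "x \<in> B" by blast
    then have "x + 0 \<odot> v = 0 + b \<odot> v" by (simp add: lin)
    then have "x = 0" using decomp_unique[OF sB nB oB nv b(3) sub_zero[OF sB] sub_zero[OF sB] b(1)] by simp
    then show "x \<in> {0}" by simp
  qed
  have dT: "vs.dim ?T = vs.dim B"
    by (rule fdp.dim_image_eq[OF lin_r]) (auto intro: inj_onI mv_inj2[OF nv])
  have "vs.dim (dbl B v) + vs.dim (B \<inter> ?T) = vs.dim B + vs.dim ?T"
    unfolding eq by (rule fd.dim_sums_Int[OF subB subT])
  moreover have "vs.dim (B \<inter> ?T) = 0" using int by simp
  ultimately show ?thesis using dT by simp
qed

lemma codim1:
  assumes S: "vs.subspace S"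
  shows "vs.dim S \<le> vs.dim {x\<in>S. p x z = 0} + 1"
proof (cases "\<forall>x\<in>S. p x z = 0")
  case True
  then have "{x\<in>S. p x z = 0} = S" by blast
  then show ?thesis by simp
next
  case False
  then obtain s where s: "s \<in> S" "p s z \<noteq> 0" by blast
  let ?S0 = "{x\<in>S. p x z = 0}"
  have "S \<subseteq> vs.span (insert s ?S0)"
  proof
    fix x assume x: "x \<in> S"
    define k where "k = p x z / p s z"
    have "x - k *s s \<in> ?S0" using x s S by (simp add: k_def lin vs.subspace_diff vs.subspace_scale)
    then have "x - k *s s \<in> vs.span ?S0" by (rule vs.span_base)
    then show "x \<in> vs.span (insert s ?S0)" by (auto simp: vs.span_breakdown_eq)
  qed
  then have "vs.dim S \<le> vs.dim (insert s ?S0)" by (rule fd.dim_mono)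
  also have "\<dots> \<le> vs.dim ?S0 + 1" by (simp add: fd.dim_insert)
  finally show ?thesis .
qed

lemma subspace_perp: "vs.subspace S \<Longrightarrow> vs.subspace {x\<in>S. p x z = 0}"
  by (rule vs.subspaceI) (auto simp: lin vs.subspace_0 vs.subspace_add vs.subspace_scale)

lemma dim_pos_nonzero: "vs.dim S > 0 \<Longrightarrow> \<exists>x\<in>S. x \<noteq> 0"
proof (rule ccontr)
  assume "vs.dim S > 0" "\<not> (\<exists>x\<in>S. x \<noteq> 0)"
  then have "S \<subseteq> {0}" by blast
  then have "vs.dim S = 0" by (simp only: fd.dim_eq_0)
  with \<open>vs.dim S > 0\<close> show False by simp
qed

lemma dim_lt_UNIV: "vs.dim S < 8 \<Longrightarrow> S \<noteq> UNIV"
  using dim8 by auto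

end

context cay
begin

definition f0 :: "'v \<Rightarrow> 'v \<Rightarrow> 'v \<Rightarrow> 'v" where
  "f0 u u' x = (SOME y. \<exists>a b. x = a *s e + b *s u \<and> y = a *s e + b *s u')"

lemma f0_eq: assumes "disc u \<noteq> 0" shows "f0 u u' (a *s e + b *s u) = a *s e + b *s u'"
  unfolding f0_def
proof (rule some_equality)
  show "\<exists>a2 b2. a *s e + b *s u = a2 *s e + b2 *s u \<and> a *s e + b *s u' = a2 *s e + b2 *s u'" by blast
next
  fix y assume "\<exists>a2 b2. a *s e + b *s u = a2 *s e + b2 *s u \<and> y = a2 *s e + b2 *s u'"
  then obtain a2 b2 where "a *s e + b *s u = a2 *s e + b2 *s u" "y = a2 *s e + b2 *s u'" by blast
  with coeff_unique[OF assms this(1)] show "y = a *s e + b *s u'" by simp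
qed

lemma prod_K: "(a *s e + b *s u) \<odot> (c *s e + d *s u) = (a * c - b * d * n u) *s e + (a * d + b * c + b * d * t u) *s u"
  by (simp add: lin uu algebra_simps)

lemma iso_K:
  assumes du: "disc u \<noteq> 0" and tt: "t u' = t u" and nn: "n u' = n u"
  shows "iso (vs.span {e, u}) (vs.span {e, u'}) (f0 u u')"
  unfolding iso_def
proof (intro conjI ballI allI)
  fix x assume "x \<in> vs.span {e, u}"
  then obtain a b where x: "x = a *s e + b *s u" by (auto simp: mem_K)
  show "f0 u u' x \<in> vs.span {e, u'}" using x f0_eq[OF du] by (auto simp: mem_K)
  show "n (f0 u u' x) = n x" using x f0_eq[OF du] by (simp add: n_lin2 tt nn)
  fix c
  have "c *s x = (c * a) *s e + (c * b) *s u" using x by (simp add: lin)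
  then show "f0 u u' (c *s x) = c *s f0 u u' x" using x f0_eq[OF du] by (simp add: lin)
next
  fix x y assume "x \<in> vs.span {e, u}" "y \<in> vs.span {e, u}"
  then obtain a b c d where x: "x = a *s e + b *s u" and y: "y = c *s e + d *s u" by (auto simp: mem_K)
  have xy: "x + y = (a + c) *s e + (b + d) *s u" using x y by (simp add: lin algebra_simps)
  have "f0 u u' (x + y) = (a + c) *s e + (b + d) *s u'" unfolding xy by (rule f0_eq[OF du])
  also have "\<dots> = f0 u u' x + f0 u u' y" unfolding x y f0_eq[OF du] by (simp add: lin algebra_simps)
  finally show "f0 u u' (x + y) = f0 u u' x + f0 u u' y" .
  have "x \<odot> y = (a * c - b * d * n u) *s e + (a * d + b * c + b * d * t u) *s u"
    unfolding x y by (rule prod_K)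
  then have "f0 u u' (x \<odot> y) = (a * c - b * d * n u) *s e + (a * d + b * c + b * d * t u) *s u'"
    using f0_eq[OF du] by simp
  also have "\<dots> = (a *s e + b *s u') \<odot> (c *s e + d *s u')"
    using prod_K[where a=a and b=b and c=c and d=d and u=u'] tt nn by simp
  finally show "f0 u u' (x \<odot> y) = f0 u u' x \<odot> f0 u u' y"
    unfolding x y f0_eq[OF du] .
next
  have "e = 1 *s e + 0 *s u" by simp
  then show "f0 u u' e = e" using f0_eq[OF du, of u' 1 0] by simp
qed

lemma dbl_UNIV:
  assumes sB: "sub B" and nB: "nd B" and dB: "vs.dim B = 4" and oB: "orth B w" and nw: "n w \<noteq> 0"
  shows "dbl B w = UNIV"
proof (rule fd.subspace_dim_equal)
  show "vs.subspace (dbl B w)" using sub_dbl[OF sB nB oB nw] by (simp add: sub_def)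
  show "vs.subspace (UNIV::'v set)" by simp
  show "dbl B w \<subseteq> UNIV" by simp
  show "vs.dim (UNIV::'v set) \<le> vs.dim (dbl B w)" using dim_dbl[OF sB nB oB nw] dB dim8 by simp
qed

lemma wstep:
  assumes sQ: "sub Q" and nQ: "nd Q" and dQ: "vs.dim Q = 4" and oQ: "orth Q w0" and nw0: "n w0 \<noteq> 0"
  shows "\<exists>w. orth Q w \<and> p w z = 0 \<and> n w \<noteq> 0"
proof -
  have U: "dbl Q w0 = UNIV" by (rule dbl_UNIV[OF sQ nQ dQ oQ nw0])
  interpret fdp: finite_dimensional_vector_space_pair_1 sc bas sc by unfold_locales
  let ?H = "(\<lambda>b. b \<odot> w0) ` Q"
  have Hchar: "orth Q h \<longleftrightarrow> h \<in> ?H" for h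
  proof
    assume oh: "orth Q h"
    have "h \<in> dbl Q w0" using U by simp
    then obtain a b where ab: "a \<in> Q" "b \<in> Q" "h = a + b \<odot> w0" unfolding dbl_def by blast
    have "\<forall>c\<in>Q. p a c = 0"
    proof
      fix c assume c: "c \<in> Q"
      have "p h c = 0" using oh c by (simp add: orth_def)
      then show "p a c = 0" using ab O1[OF sQ oQ c ab(2)] by (simp add: lin p_sym)
    qed
    then have "a = 0" using nQ ab(1) unfolding nd_def by blast
    then show "h \<in> ?H" using ab by simp
  next
    assume "h \<in> ?H"
    then obtain b where b: "b \<in> Q" "h = b \<odot> w0" by blast
    show "orth Q h" unfolding orth_def using O1[OF sQ oQ _ b(1)] b by (simp add: p_sym)
  qed
  have subH: "vs.subspace ?H"
  proof (rule vs.subspaceI)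
    show "0 \<in> ?H" using sub_zero[OF sQ] by (force simp: lin)
    show "x + y \<in> ?H" if "x \<in> ?H" "y \<in> ?H" for x y
      using that sub_add[OF sQ] by (force simp: lin)
    show "c *s x \<in> ?H" if "x \<in> ?H" for c x
      using that sub_scale[OF sQ] by (force simp: lin)
  qed
  have dH: "vs.dim ?H = 4"
    using fdp.dim_image_eq[OF lin_r, of w0 Q] mv_inj2[OF nw0] dQ by (auto intro: inj_onI)
  define W where "W = {x\<in>?H. p x z = 0}"
  have subW: "vs.subspace W" unfolding W_def by (rule subspace_perp[OF subH])
  have dW: "vs.dim W \<ge> 3" using codim1[OF subH, of z] dH unfolding W_def by simp
  show ?thesis
  proof (rule ccontr)
    assume "\<not> ?thesis"
    then have nW: "\<forall>x\<in>W. n x = 0" using Hchar unfolding W_def by blast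
    have pW: "\<forall>x\<in>W. \<forall>y\<in>W. p x y = 0"
      using nW subW by (simp add: polar_def vs.subspace_add)
    obtain h1 where h1: "h1 \<in> W" "h1 \<noteq> 0" using dim_pos_nonzero[of W] dW by auto
    obtain c where c: "p h1 c \<noteq> 0" using nondeg h1(2) by blast
    have "c \<in> dbl Q w0" using U by simp
    then obtain a b where ab: "a \<in> Q" "b \<in> Q" "c = a + b \<odot> w0" unfolding dbl_def by blast
    have h1H: "h1 \<in> ?H" using h1 by (simp add: W_def)
    have "p h1 a = 0" using Hchar[of h1] h1H ab(1) by (simp add: orth_def)
    then have q: "p h1 (b \<odot> w0) \<noteq> 0" using c ab by (simp add: lin)
    define q where "q = b \<odot> w0"
    have qH: "q \<in> ?H" using ab by (simp add: q_def)
    define W2 where "W2 = {x\<in>W. p x q = 0}"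
    have "vs.dim W2 \<ge> 2" using codim1[OF subW, of q] dW unfolding W2_def by simp
    then obtain h where h: "h \<in> W2" "h \<noteq> 0" using dim_pos_nonzero[of W2] by auto
    have qW: "q \<notin> vs.span W"
    proof
      assume "q \<in> vs.span W"
      moreover have "vs.span W = W" using subW by (simp add: vs.span_eq_iff)
      ultimately have "q \<in> W" by simp
      then show False using pW h1 q by (simp add: q_def)
    qed
    have "vs.dim (insert q W) = vs.dim W + 1" using qW by (simp add: fd.dim_insert)
    then have "vs.dim ?H \<le> vs.dim (insert q W)" using dH dW by simp
    moreover have "insert q W \<subseteq> ?H" using qH by (auto simp: W_def)
    ultimately have sp: "vs.span (insert q W) = vs.span ?H" by (simp add: fd.dim_eq_span)
    have "vs.subspace {y. p h y = 0}" by (rule vs.subspaceI) (auto simp: lin)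
    moreover have "insert q W \<subseteq> {y. p h y = 0}" using h pW unfolding W2_def by auto
    ultimately have "vs.span (insert q W) \<subseteq> {y. p h y = 0}" by (rule vs.span_minimal[rotated])
    moreover have "vs.span ?H = ?H" using subH by (simp add: vs.span_eq_iff)
    ultimately have hH: "\<forall>y\<in>?H. p h y = 0" using sp by auto
    have hQ: "\<forall>y\<in>Q. p h y = 0" using Hchar[of h] h unfolding W2_def W_def orth_def by auto
    have "\<forall>y. p h y = 0"
    proof
      fix y
      have "y \<in> dbl Q w0" using U by simp
      then obtain a b where "a \<in> Q" "b \<in> Q" "y = a + b \<odot> w0" unfolding dbl_def by blast
      then show "p h y = 0" using hH hQ by (simp add: lin)
    qed
    then have "h = 0" using nondeg by metis
    with h show False by simp
  qed
qed

end

context cay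
begin

lemma sep:
  assumes a0: "a \<noteq> 0" and b: "\<forall>c. b \<noteq> c *s a"
  shows "\<exists>z. p z a = 0 \<and> p z b = 1"
proof -
  obtain q where q: "p q a \<noteq> 0" using nondeg a0 p_sym by metis
  define q1 where "q1 = (1 / p q a) *s q"
  have q1: "p q1 a = 1" using q by (simp add: q1_def lin)
  have "b - p q1 b *s a \<noteq> 0" using b by auto
  then obtain r where r: "p r (b - p q1 b *s a) \<noteq> 0" using nondeg p_sym by metis
  define r' where "r' = r - p r a *s q1"
  have r'a: "p r' a = 0" using q1 by (simp add: r'_def lin)
  have r'b: "p r' b \<noteq> 0" using r by (simp add: r'_def lin algebra_simps)
  define z where "z = (1 / p r' b) *s r'"
  have "p z a = 0 \<and> p z b = 1" using r'a r'b by (simp add: z_def lin)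
  then show ?thesis by blast
qed

context
  fixes g assumes gO: "g \<in> orthogonal_group sc n" and ge: "g e = e"
begin

lemma g_lin: "Vector_Spaces.linear sc sc g" using gO by (simp add: orthogonal_group_def)
lemma g_add: "g (x + y) = g x + g y" using g_lin by (simp add: Vector_Spaces.linear_iff)
lemma g_scale: "g (c *s x) = c *s g x" using g_lin by (simp add: Vector_Spaces.linear_iff)
lemma g_n: "n (g x) = n x" using gO by (simp add: orthogonal_group_def)
lemma g_bij: "bij g" using gO by (simp add: orthogonal_group_def)
lemma g_p: "p (g x) (g y) = p x y" by (simp add: polar_def g_n g_add[symmetric])
lemma g_t: "t (g x) = t x" using g_p[of x e] ge by (simp add: t_def)
lemma g_inv: "g (inv g y) = y" using g_bij by (simp add: bij_is_surj surj_f_inv_f)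

lemma chain:
  assumes du: "disc u \<noteq> 0" and ve: "p v e = 0" and vu: "p v u = 0" and nv: "n v \<noteq> 0"
  shows "\<exists>\<sigma>. algebra_aut sc (\<odot>) \<sigma> \<and> \<sigma> e = e \<and> \<sigma> u = g u \<and> \<sigma> v = g v"
proof -
  let ?K = "vs.span {e, u}" and ?K' = "vs.span {e, g u}"
  have du': "disc (g u) \<noteq> 0" using du by (simp add: disc_def g_t g_n)
  have iso0: "iso ?K ?K' (f0 u (g u))" by (rule iso_K[OF du g_t g_n])
  have oK: "orth ?K v" unfolding orth_def using ve vu by (auto simp: mem_K lin)
  have oK': "orth ?K' (g v)" unfolding orth_def
  proof
    fix b assume "b \<in> ?K'"
    then obtain a c where b: "b = a *s e + c *s g u" by (auto simp: mem_K)
    then have "b = g (a *s e + c *s u)" by (simp add: g_add g_scale ge)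
    then show "p (g v) b = 0" using ve vu by (simp add: g_p lin)
  qed
  have nvg: "n (g v) = n v" by (rule g_n)
  have nv': "n (g v) \<noteq> 0" using nv nvg by simp
  note sK = sub_K[of u] and nK = nd_K[OF du] and sK' = sub_K[of "g u"] and nK' = nd_K[OF du']
  let ?Q = "dbl ?K v" and ?Q' = "dbl ?K' (g v)"
  have sQ: "sub ?Q" by (rule sub_dbl[OF sK nK oK nv])
  have nQ: "nd ?Q" by (rule nd_dbl[OF sK nK oK nv])
  have hQ: "hasproj ?Q" by (rule hasproj_dbl[OF sK oK nv hasproj_K[OF du]])
  have dQ: "vs.dim ?Q = 4" using dim_dbl[OF sK nK oK nv] dim_K[OF du] by simp
  have sQ': "sub ?Q'" by (rule sub_dbl[OF sK' nK' oK' nv'])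
  have nQ': "nd ?Q'" by (rule nd_dbl[OF sK' nK' oK' nv'])
  define s1 where "s1 = ext ?K v (f0 u (g u)) (g v)"
  have iso1: "iso ?Q ?Q' s1" unfolding s1_def by (rule iso_ext[OF sK nK oK nv sK' nK' oK' nvg iso0])
  have uK: "u \<in> ?K" by (simp add: vs.span_base)
  have s1u: "s1 u = g u"
  proof -
    have "s1 u = f0 u (g u) u" unfolding s1_def by (rule ext_B[OF sK nK oK nv sK' nK' oK' nvg iso0 uK])
    also have "\<dots> = f0 u (g u) (0 *s e + 1 *s u)" by simp
    also have "\<dots> = g u" by (simp only: f0_eq[OF du]) simp
    finally show ?thesis .
  qed
  have s1v: "s1 v = g v" unfolding s1_def by (rule ext_v[OF sK nK oK nv sK' nK' oK' nvg iso0])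
  obtain w0 where w0: "orth ?Q w0" "n w0 \<noteq> 0" using aniso[OF sQ hQ] dim_lt_UNIV[of ?Q] dQ by auto
  define z where "z = inv g (g u \<odot> g v)"
  obtain w where w: "orth ?Q w" "p w z = 0" "n w \<noteq> 0" using wstep[OF sQ nQ dQ w0, of z] by blast
  have vQ: "v \<in> ?Q" by (rule v_dbl[OF sK nK oK nv])
  have oQ': "orth ?Q' (g w)" unfolding orth_def
  proof
    fix y assume "y \<in> ?Q'"
    then obtain a' b' where ab: "a' \<in> ?K'" "b' \<in> ?K'" "y = a' + b' \<odot> g v" unfolding dbl_def by blast
    obtain a1 a2 where a: "a' = a1 *s e + a2 *s g u" using ab(1) by (auto simp: mem_K)
    obtain b1 b2 where b: "b' = b1 *s e + b2 *s g u" using ab(2) by (auto simp: mem_K)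
    have aQ: "a1 *s e + a2 *s u \<in> ?Q" by (rule B_dbl[OF sK nK oK nv]) (auto simp: mem_K)
    have 1: "p (g w) a' = 0"
    proof -
      have "a' = g (a1 *s e + a2 *s u)" using a by (simp add: g_add g_scale ge)
      then show ?thesis using w(1) aQ by (simp add: g_p orth_def)
    qed
    have "g u \<odot> g v = g z" by (simp add: z_def g_inv)
    then have "b' \<odot> g v = b1 *s g v + b2 *s g z" using b by (simp add: lin)
    then have 2: "p (g w) (b' \<odot> g v) = 0" using w vQ by (simp add: lin g_p orth_def)
    show "p (g w) y = 0" using 1 2 ab by (simp add: lin)
  qed
  have nwg: "n (g w) = n w" by (rule g_n)
  have U: "dbl ?Q w = UNIV" by (rule dbl_UNIV[OF sQ nQ dQ w(1,3)])
  define s where "s = ext ?Q w s1 (g w)"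
  have isoU: "iso UNIV (dbl ?Q' (g w)) s"
    using iso_ext[OF sQ nQ w(1,3) sQ' nQ' oQ' nwg iso1] U unfolding s_def by simp
  have sU: "sub (UNIV :: 'v set)" using sub_dbl[OF sQ nQ w(1,3)] U by simp
  have uQ: "u \<in> ?Q" by (rule B_dbl[OF sK nK oK nv uK])
  have su: "s u = g u" using ext_B[OF sQ nQ w(1,3) sQ' nQ' oQ' nwg iso1 uQ] s1u by (simp add: s_def)
  have sv: "s v = g v" using ext_B[OF sQ nQ w(1,3) sQ' nQ' oQ' nwg iso1 vQ] s1v by (simp add: s_def)
  have se: "s e = e" by (rule iso_e[OF isoU])
  have slin: "Vector_Spaces.linear sc sc s"
    using isoU by (simp add: Vector_Spaces.linear_iff vs iso_add iso_scale)
  have sinj: "inj s"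
  proof (rule injI)
    fix x y assume h: "s x = s y"
    have "s (x - y) = 0" using iso_diff[OF isoU sU] h by simp
    then have "\<And>c. p (x - y) c = 0" using iso_p[OF isoU sU] by (metis iso_zero[OF isoU sU] iso_p[OF isoU sU] UNIV_I p_zerol)
    then have "x - y = 0" by (rule nondeg)
    then show "x = y" by simp
  qed
  have ssurj: "surj s" by (rule fd.linear_inj_imp_surj[OF slin sinj])
  have "algebra_aut sc (\<odot>) s"
    unfolding algebra_aut_def using slin sinj ssurj iso_mult[OF isoU] by (simp add: bij_def)
  then show ?thesis using se su sv by blast
qed

end

end

context cay
begin

context
  fixes \<phi> assumes aut: "algebra_aut sc (\<odot>) \<phi>"
begin

lemma a_lin: "Vector_Spaces.linear sc sc \<phi>" using aut by (simp add: algebra_aut_def)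
lemma a_add: "\<phi> (x + y) = \<phi> x + \<phi> y" using a_lin by (simp add: Vector_Spaces.linear_iff)
lemma a_scale: "\<phi> (c *s x) = c *s \<phi> x" using a_lin by (simp add: Vector_Spaces.linear_iff)
lemma a_mult: "\<phi> (x \<odot> y) = \<phi> x \<odot> \<phi> y" using aut by (simp add: algebra_aut_def)
lemma a_bij: "bij \<phi>" using aut by (simp add: algebra_aut_def)
lemma a_diff: "\<phi> (x - y) = \<phi> x - \<phi> y"
  using a_add[of "x - y" y] by (simp add: eq_diff_eq)
lemma a_zero: "\<phi> 0 = 0" using a_scale[of 0 0] by simp

lemma a_e: "\<phi> e = e"
proof -
  obtain y where y: "\<phi> y = e" using a_bij by (metis bij_pointE)
  have "\<phi> e \<odot> \<phi> y = \<phi> (e \<odot> y)" by (simp only: a_mult)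
  then show ?thesis using y by simp
qed

lemma a_n: "n (\<phi> x) = n x"
proof -
  have "\<phi> (x \<odot> x) = t x *s \<phi> x - n x *s e" by (simp add: Q a_diff a_scale a_e)
  moreover have "\<phi> (x \<odot> x) = t (\<phi> x) *s \<phi> x - n (\<phi> x) *s e" by (simp only: a_mult) (rule Q)
  ultimately have h: "(t (\<phi> x) - t x) *s \<phi> x = (n (\<phi> x) - n x) *s e" by (simp add: algebra_simps)
  have tt: "t (\<phi> x) = t x"
  proof (rule ccontr)
    assume ne: "t (\<phi> x) \<noteq> t x"
    define c where "c = (n (\<phi> x) - n x) / (t (\<phi> x) - t x)"
    have "\<phi> x = c *s e"
    proof -
      have "(1 / (t (\<phi> x) - t x)) *s ((t (\<phi> x) - t x) *s \<phi> x) = \<phi> x" using ne by simp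
      then show ?thesis using h by (simp add: c_def)
    qed
    also have "\<dots> = \<phi> (c *s e)" by (simp add: a_scale a_e)
    finally have "x = c *s e" using a_bij by (simp add: bij_def inj_eq)
    then have "\<phi> x = x" by (simp add: a_scale a_e)
    with ne show False by simp
  qed
  then have "(n (\<phi> x) - n x) *s e = 0" using h by simp
  then show ?thesis using e_ne by simp
qed

end

lemma locaut_O:
  assumes "local_aut sc (\<odot>) \<psi>"
  shows "\<psi> \<in> orthogonal_group sc n \<and> \<psi> e = e"
proof -
  have lin: "Vector_Spaces.linear sc sc \<psi>" and loc: "\<forall>x. \<exists>\<phi>. algebra_aut sc (\<odot>) \<phi> \<and> \<psi> x = \<phi> x"
    using assms by (auto simp: local_aut_def)
  have nn: "n (\<psi> x) = n x" for x using loc a_n by metis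
  have ee: "\<psi> e = e" using loc a_e by metis
  have add: "\<psi> (x + y) = \<psi> x + \<psi> y" for x y using lin by (simp add: Vector_Spaces.linear_iff)
  have inj: "inj \<psi>"
  proof (rule injI)
    fix x y assume h: "\<psi> x = \<psi> y"
    have "\<psi> (x - y) = 0" using add[of "x - y" y] h by simp
    moreover obtain \<phi> where "algebra_aut sc (\<odot>) \<phi>" "\<psi> (x - y) = \<phi> (x - y)" using loc by blast
    ultimately have "\<phi> (x - y) = \<phi> 0" by (simp add: a_zero)
    then have "x - y = 0" using a_bij[OF \<open>algebra_aut sc (\<odot>) \<phi>\<close>] by (simp add: bij_def inj_eq)
    then show "x = y" by simp
  qed
  have "surj \<psi>" by (rule fd.linear_inj_imp_surj[OF lin inj])
  then show ?thesis using lin inj nn ee by (simp add: orthogonal_group_def bij_def)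
qed

lemma n_diff: "n (x - y) = n x + n y - p x y"
proof -
  have "n (x - y) = n (x + (- y))" by simp
  also have "\<dots> = n x + n y - p x y" by (simp only: n_add n_minus p_minusr) simp
  finally show ?thesis .
qed

lemma n_sub_e: "n (x - c *s e) = n x + c * c - c * t x"
proof -
  have "n (x - c *s e) = n (x + (- (c *s e)))" by simp
  also have "\<dots> = n x + c * c - c * t x" by (simp only: n_add n_minus n_se lin t_def) simp
  finally show ?thesis .
qed

lemma aut_id: "algebra_aut sc (\<odot>) id"
  by (simp add: algebra_aut_def Vector_Spaces.linear_iff vs)

lemma O_locaut:
  assumes gO: "g \<in> orthogonal_group sc n" and ge: "g e = e"
  shows "local_aut sc (\<odot>) g"
  unfolding local_aut_def
proof (intro conjI allI)
  show "Vector_Spaces.linear sc sc g" by (rule g_lin[OF gO ge])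
  fix x
  note gadd = g_add[OF gO ge] and gscale = g_scale[OF gO ge]
  show "\<exists>\<phi>. algebra_aut sc (\<odot>) \<phi> \<and> g x = \<phi> x"
  proof (cases "\<exists>c. x = c *s e")
    case True
    then obtain c where "x = c *s e" by blast
    then have "g x = id x" by (simp add: gscale ge)
    then show ?thesis using aut_id by blast
  next
    case False
    then have xe: "\<forall>c. x \<noteq> c *s e" by blast
    have aut_from: "\<exists>\<phi>. algebra_aut sc (\<odot>) \<phi> \<and> g x = \<phi> x"
      if du: "disc u \<noteq> 0" and ve: "p v e = 0" and vu: "p v u = 0" and nv: "n v \<noteq> 0"
        and xr: "x = a *s e + b *s u + c *s v" for u v a b c
    proof -
      obtain s where s: "algebra_aut sc (\<odot>) s" "s e = e" "s u = g u" "s v = g v"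
        using chain[OF gO ge du ve vu nv] by blast
      have "s x = g x" unfolding xr using s by (simp add: a_add[OF s(1)] a_scale[OF s(1)] gadd gscale ge)
      then show ?thesis using s(1) by metis
    qed
    show ?thesis
    proof (cases "disc x \<noteq> 0")
      case True
      let ?K = "vs.span {e, x}"
      have "vs.dim ?K < 8" using dim_K[OF True] by simp
      then obtain v where v: "orth ?K v" "n v \<noteq> 0"
        using aniso[OF sub_K hasproj_K[OF True]] dim_lt_UNIV by blast
      have pv: "p v e = 0" "p v x = 0" using v(1) by (auto simp: orth_def vs.span_base)
      have "x = 0 *s e + 1 *s x + 0 *s v" by simp
      then show ?thesis using aut_from[OF True pv v(2)] by blast
    next
      case False
      then have dx: "4 * n x = t x * t x" by (simp add: disc_def)
      show ?thesis
      proof (cases "(2::'a) = 0")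
        case False
        have f4: "(4::'a) \<noteq> 0"
        proof -
          have "(4::'a) = 2 * 2" by simp
          then show ?thesis using False mult_eq_0_iff by metis
        qed
        define tau where "tau = t x"
        define x0 where "x0 = x - (tau / 2) *s e"
        have tx0: "t x0 = 0" using False by (simp add: x0_def t_add t_diff t_scale tau_def)
        have nx0: "n x0 = 0"
        proof -
          define h where "h = tau / 2"
          have th: "tau = 2 * h" using False by (simp add: h_def)
          have "n x0 = n x + h * h - h * tau" by (simp add: x0_def n_sub_e tau_def h_def)
          also have "\<dots> = n x - h * h" by (simp add: th algebra_simps)
          finally have a: "n x0 = n x - h * h" .
          have "4 * (n x - h * h) = 4 * n x - tau * tau" by (simp add: th algebra_simps)
          also have "\<dots> = 0" using dx by (simp add: tau_def)
          finally have "n x - h * h = 0" using f4 by simp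
          with a show ?thesis by simp
        qed
        have x0e: "\<forall>c. x0 \<noteq> c *s e"
        proof
          fix c show "x0 \<noteq> c *s e"
          proof
            assume "x0 = c *s e"
            then have "x = (c + tau / 2) *s e" by (simp add: x0_def lin algebra_simps eq_diff_eq)
            with xe show False by blast
          qed
        qed
        obtain z where z: "p z e = 0" "p z x0 = 1" using sep[OF e_ne] x0e by (metis p_sym)
        define al where "al = (1 - 2 * n z) / 2"
        define v where "v = al *s x0 + z"
        have px0e: "p x0 e = 0" using tx0 by (simp add: t_def)
        have ve: "p v e = 0" using z px0e by (simp add: v_def lin)
        have nv: "n v = 1 / 2"
          using z nx0 False by (simp add: v_def n_add n_scale lin al_def p_sym[of x0 z] field_simps)
        have pvx0: "p v x0 = 1"
          using z nx0 by (simp add: v_def lin p_self p_sym[of z x0])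
        have xx0: "x = x0 + (tau / 2) *s e" by (simp add: x0_def lin)
        have pvx: "p v x = 1" using pvx0 ve by (simp add: xx0 lin)
        define u where "u = x - v"
        have vu: "p v u = 0" using pvx nv False by (simp add: u_def lin p_self mult.commute)
        have tv: "t v = 0" using ve by (simp add: t_def)
        have du: "disc u = - 2"
        proof -
          have nv2: "2 * n v = 1" using nv False by (simp add: mult.commute)
          have "n u = n x + n v - p x v" by (simp add: u_def n_diff)
          then have "2 * n u = 2 * (n x + n v - p x v)" by simp
          also have "\<dots> = 2 * n x + 2 * n v - 2 * p x v" by (simp add: right_diff_distrib distrib_left)
          finally have "2 * n u = 2 * n x + 2 * n v - 2 * p x v" .
          then have "2 * n u = 2 * n x - 1" using nv2 pvx by (simp add: p_sym[of x v])
          then have "4 * n u = 4 * n x - 2"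
            by (metis (no_types, lifting) mult.assoc mult_2 numeral_Bit0 one_add_one right_diff_distrib' mult_1_right)
          moreover have "t u = t x" using tv by (simp add: u_def t_diff)
          ultimately show ?thesis using dx by (simp add: disc_def)
        qed
        have "disc u \<noteq> 0" using du False by simp
        moreover have "n v \<noteq> 0"
        proof
          assume "n v = 0"
          with nv have "(1::'a) / 2 = 0" by metis
          then show False using False by simp
        qed
        moreover have "x = 0 *s e + 1 *s u + 1 *s v" by (simp add: u_def)
        ultimately show ?thesis using aut_from ve vu by blast
      next
        case True
        have four: "(4::'a) = 0" using True by (metis mult_2 numeral_Bit0 one_add_one mult_zero_left)
        have tx: "t x = 0" using dx four by simp
        have pee: "p e e = 0" using True by (simp add: p_self n_e)
        define v where "v = (if n x = 0 then x + e else x)"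
        have ve: "p v e = 0" using tx pee by (simp add: v_def lin t_def)
        have nv: "n v \<noteq> 0" using tx by (simp add: v_def n_add n_e t_def)
        have v0: "v \<noteq> 0" using nv by auto
        have ev: "\<forall>c. e \<noteq> c *s v"
        proof
          fix c show "e \<noteq> c *s v"
          proof
            assume h: "e = c *s v"
            then have c0: "c \<noteq> 0" using e_ne by auto
            then have "v = (1 / c) *s e" using h by simp
            then show False using xe
              by (cases "n x = 0") (auto simp: v_def eq_diff_eq[symmetric] lin
                  intro: exI[of _ "1 / c - 1"] dest: spec[of _ "1 / c - 1"] spec[of _ "1 / c"])
          qed
        qed
        obtain u where u: "p u v = 0" "p u e = 1" using sep[OF v0 ev] by blast
        have "disc u = - 1" using u four by (simp add: disc_def t_def)
        then have du: "disc u \<noteq> 0" by simp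
        have vu: "p v u = 0" using u by (simp add: p_sym)
        have "x = (if n x = 0 then -1 else 0) *s e + 0 *s u + 1 *s v" by (simp add: v_def)
        then show ?thesis using aut_from[OF du ve vu nv] by blast
      qed
    qed
  qed
qed

theorem main: "{\<psi>. local_aut sc (\<odot>) \<psi>} = {\<phi> \<in> orthogonal_group sc n. \<phi> e = e}"
  using locaut_O O_locaut by blast

end

theorem theorem3p2:
  fixes sc :: "'a::field \<Rightarrow> 'v::ab_group_add \<Rightarrow> 'v"
    and mult :: "'v \<Rightarrow> 'v \<Rightarrow> 'v" and e :: 'v and n :: "'v \<Rightarrow> 'a"
  assumes "cayley_algebra sc mult e n"
  shows "{\<psi>. local_aut sc mult \<psi>} = {\<phi> \<in> orthogonal_group sc n. \<phi> e = e}"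
proof -
  interpret cay sc mult e n by (rule cay.intro) (rule assms)
  show ?thesis by (rule main)
qed

end
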